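(* Assume (R), and let $(\mathbb P^n)_{n\ge1}\subset\mathcal P$ satisfy $\sup_nJ(\mathbb P^n)<\infty$. Define $\lambda_1^n(t):=\frac1d\mathrm{tr}(\bar\Sigma_2(t,X_t)^{-1}\Sigma^{\mathbb P^n}_t)$. Then $\sup_{n\ge1}\mathbb E^{\mathbb P^n}[\int_0^1\lambda_1^n(t)\log\lambda_1^n(t)\,dt]<\infty$ (convention $0\log0=0$).
   Context: $\Omega=C([0,1];\mathbb R^d)$, canonical process $X$. $\mathcal P$ is the set of probability measures $\mathbb P$ on $\Omega$ under which $X$ is a continuous local martingale with $\langle X\rangle_t=\int_0^t\Sigma^{\mathbb P}_sds$, $\Sigma^{\mathbb P}$ progressively measurable with values in $\mathbb S^d_+$. Continuous $\lambda_2:[0,1]\times\mathbb R^d\to(0,\infty)$, $\bar\Sigma_2:[0,1]\times\mathbb R^d\to\mathbb S^d_{++}$; (R): $\underline b\le\lambda_2\le\overline b$ and $\bar\Sigma_2\preceq MI_d$ for constants $0<\underline b\le\overline b$, $M>0$. For $\Sigma_1\in\mathbb S^d_+$, $\lambda_1:=\frac1d\mathrm{tr}(\bar\Sigma_2(t,x)^{-1}\Sigma_1)$, $\bar\Sigma_1:=\Sigma_1/\lambda_1$ if $\Sigma_1\ne0$; $\ell^{\mathrm{tr}}(t,x,\Sigma_1)=\lambda_1\log\frac{\lambda_1}{\lambda_2}-\lambda_1+\lambda_2-\frac{\lambda_1}2\log\det(\bar\Sigma_2^{-1}\bar\Sigma_1)$ on $\mathbb S^d_{++}$, $=\lambda_2(t,x)$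 at $\Sigma_1=0$, $=+\infty$ on singular nonzero $\Sigma_1$. $\xi:C([0,1];\mathbb R^d)\to\mathbb R$ bounded Borel, continuous for the uniform topology; $J(\mathbb P)=\mathbb E^{\mathbb P}[\int_0^1\ell^{\mathrm{tr}}(t,X_t,\Sigma^{\mathbb P}_t)dt+\xi(X)]$. *)

theory Defs
  imports "HOL-Probability.Probability"
begin

text \<open>A path is represented as a function real => real^'d that is continuous on [0,1]
  and constant outside [0,1] (extended by its end values); this is in bijection with C([0,1];R^d).
  The canonical process is X_t(w) = w t.\<close>

definition paths :: "(real \<Rightarrow> real^'d) set" where
  "paths = {w. continuous_on {0..1} w \<and> (\<forall>t. w t = w (min 1 (max 0 t)))}"

definition canF :: "real \<Rightarrow> (real \<Rightarrow> real^'d) measure" where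
  "canF t = sigma paths {{w \<in> paths. w s \<in> A} | s A. s \<in> {0..t} \<and> A \<in> sets borel}"

text \<open>Sigma-algebra on the path space: generated by the coordinates (= Borel sigma-algebra of the
  uniform topology on C([0,1];R^d)).\<close>
definition path_space :: "(real \<Rightarrow> real^'d) measure" where
  "path_space = canF 1"

definition unif_dist :: "(real \<Rightarrow> real^'d) \<Rightarrow> (real \<Rightarrow> real^'d) \<Rightarrow> real" where
  "unif_dist v w = (SUP t\<in>{0..1}. norm (v t - w t))"

definition martingale_on :: "(real \<Rightarrow> real^'d) measure \<Rightarrow> (real \<Rightarrow> (real \<Rightarrow> real^'d) \<Rightarrow> real) \<Rightarrow> bool" where
  "martingale_on P M \<longleftrightarrow>
     (\<forall>t\<in>{0..1}. integrable P (M t) \<and> M t \<in> borel_measurable (canF t)) \<and>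
     (\<forall>s t. 0 \<le> s \<longrightarrow> s \<le> t \<longrightarrow> t \<le> 1 \<longrightarrow>
        (\<forall>A\<in>sets (canF s). (LINT w:A|P. M t w) = (LINT w:A|P. M s w)))"

definition cont_local_martingale :: "(real \<Rightarrow> real^'d) measure \<Rightarrow> (real \<Rightarrow> (real \<Rightarrow> real^'d) \<Rightarrow> real) \<Rightarrow> bool" where
  "cont_local_martingale P M \<longleftrightarrow>
     (\<forall>t\<in>{0..1}. M t \<in> borel_measurable (canF t)) \<and>
     (AE w in P. continuous_on {0..1} (\<lambda>t. M t w)) \<and>
     (\<exists>\<tau> :: nat \<Rightarrow> (real \<Rightarrow> real^'d) \<Rightarrow> real.
        (\<forall>k. stopping_time canF (\<tau> k)) \<and>
        (\<forall>k. \<forall>w\<in>paths. 0 \<le> \<tau> k w \<and> \<tau> k w \<le> 1 \<and> \<tau> k w \<le> \<tau> (Suc k) w) \<and>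
        (AE w in P. \<exists>k. \<tau> k w = 1) \<and>
        (\<forall>k. martingale_on P (\<lambda>t w. M (min t (\<tau> k w)) w - M 0 w)))"

definition psd :: "real^'d^'d \<Rightarrow> bool" where
  "psd A \<longleftrightarrow> transpose A = A \<and> (\<forall>v. 0 \<le> v \<bullet> (A *v v))"

definition pd :: "real^'d^'d \<Rightarrow> bool" where
  "pd A \<longleftrightarrow> transpose A = A \<and> (\<forall>v. v \<noteq> 0 \<longrightarrow> 0 < v \<bullet> (A *v v))"

definition progressive :: "(real \<Rightarrow> (real \<Rightarrow> real^'d) \<Rightarrow> real^'d^'d) \<Rightarrow> bool" where
  "progressive \<Sigma> \<longleftrightarrow>
     (\<forall>t\<in>{0..1}. (\<lambda>(s, w). \<Sigma> s w) \<in> borel_measurable (restrict_space borel {0..t} \<Otimes>\<^sub>M canF t))"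

text \<open>The bracket condition is expressed by its defining property:
  int_0^1 |Sigma| < infinity a.s. and X^i X^j - int_0^. Sigma^{ij} is a continuous local martingale.\<close>
definition in_calP :: "(real \<Rightarrow> real^'d) measure \<Rightarrow> (real \<Rightarrow> (real \<Rightarrow> real^'d) \<Rightarrow> real^'d^'d) \<Rightarrow> bool" where
  "in_calP P \<Sigma> \<longleftrightarrow>
     prob_space P \<and> sets P = sets path_space \<and>
     progressive \<Sigma> \<and>
     (\<forall>t\<in>{0..1}. \<forall>w\<in>paths. psd (\<Sigma> t w)) \<and>
     (\<forall>i. cont_local_martingale P (\<lambda>t w. w t $ i)) \<and>
     (AE w in P. \<forall>i j. set_integrable lborel {0..1} (\<lambda>s. \<Sigma> s w $ i $ j)) \<and>
     (\<forall>i j. cont_local_martingale P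
        (\<lambda>t w. w t $ i * w t $ j - (LINT s:{0..t}|lborel. \<Sigma> s w $ i $ j)))"

definition lambda1 :: "(real \<Rightarrow> real^'d \<Rightarrow> real^'d^'d) \<Rightarrow> real \<Rightarrow> real^'d \<Rightarrow> real^'d^'d \<Rightarrow> real" where
  "lambda1 S2 t x S1 = trace (matrix_inv (S2 t x) ** S1) / real CARD('d)"

definition ell_tr :: "(real \<Rightarrow> real^'d \<Rightarrow> real) \<Rightarrow> (real \<Rightarrow> real^'d \<Rightarrow> real^'d^'d) \<Rightarrow>
    real \<Rightarrow> real^'d \<Rightarrow> real^'d^'d \<Rightarrow> ereal" where
  "ell_tr l2 S2 t x S1 =
     (if S1 = 0 then ereal (l2 t x)
      else if invertible S1 then
        (let l1 = lambda1 S2 t x S1; S1b = (1 / l1) *\<^sub>R S1 in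
         ereal (l1 * ln (l1 / l2 t x) - l1 + l2 t x
                - l1 / 2 * ln (det (matrix_inv (S2 t x) ** S1b))))
      else \<infinity>)"

definition qint :: "'a measure \<Rightarrow> ('a \<Rightarrow> ereal) \<Rightarrow> ereal" where
  "qint M f = enn2ereal (\<integral>\<^sup>+ x. e2ennreal (f x) \<partial>M) - enn2ereal (\<integral>\<^sup>+ x. e2ennreal (- f x) \<partial>M)"

definition J_obj :: "(real \<Rightarrow> real^'d \<Rightarrow> real) \<Rightarrow> (real \<Rightarrow> real^'d \<Rightarrow> real^'d^'d) \<Rightarrow>
    ((real \<Rightarrow> real^'d) \<Rightarrow> real) \<Rightarrow> (real \<Rightarrow> real^'d) measure \<Rightarrow>
    (real \<Rightarrow> (real \<Rightarrow> real^'d) \<Rightarrow> real^'d^'d) \<Rightarrow> ereal" where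
  "J_obj l2 S2 \<xi> P \<Sigma> = qint P (\<lambda>w.
      qint (restrict_space lborel {0..1}) (\<lambda>t. ell_tr l2 S2 t (w t) (\<Sigma> t w)) + ereal (\<xi> w))"

definition xlogx :: "real \<Rightarrow> real" where
  "xlogx x = (if x = 0 then 0 else x * ln x)"

end

theory Submission
  imports Defs
begin

lemma sym_dot:
  fixes A :: "real^'n^'n"
  assumes "transpose A = A"
  shows "x \<bullet> (A *v y) = (A *v x) \<bullet> y"
  by (metis assms dot_lmul_matrix transpose_matrix_vector)

lemma eig_exists:
  fixes A :: "real^'n^'n"
  assumes sym: "transpose A = A" and W: "subspace W" and inv: "\<And>x. x \<in> W \<Longrightarrow> A *v x \<in> W"
    and ne: "W \<noteq> {0}"
  shows "\<exists>v\<in>W. norm v = 1 \<and> A *v v = (v \<bullet> (A *v v)) *\<^sub>R v"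
proof -
  let ?K = "W \<inter> sphere 0 1"
  have "compact ?K"
    by (simp add: W closed_subspace closed_Int_compact)
  obtain y where y: "y \<in> W" "y \<noteq> 0" using ne W subspace_0 by blast
  then have "y /\<^sub>R norm y \<in> ?K" using W by (auto simp: subspace_scale)
  then have Kne: "?K \<noteq> {}" by blast
  have "continuous_on ?K (\<lambda>x. x \<bullet> (A *v x))"
    by (intro continuous_intros linear_continuous_on matrix_vector_mul_linear)
  then obtain v where v: "v \<in> ?K" and vmax: "\<And>x. x \<in> ?K \<Longrightarrow> x \<bullet> (A *v x) \<le> v \<bullet> (A *v v)"
    using continuous_attains_sup[OF \<open>compact ?K\<close> Kne] by blast
  define m where "m = v \<bullet> (A *v v)"
  define w where "w = A *v v - m *\<^sub>R v"
  have vW: "v \<in> W" and nv: "norm v = 1" using v by auto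
  have vv: "v \<bullet> v = 1" using nv by (simp add: norm_eq_1)
  have wW: "w \<in> W" unfolding w_def using W inv[OF vW] vW by (simp add: subspace_diff subspace_scale)
  have vw: "v \<bullet> w = 0" unfolding w_def m_def by (simp add: inner_diff_right vv)
  have wAv: "w \<bullet> (A *v v) = w \<bullet> w"
    unfolding w_def by (simp add: inner_diff_left inner_diff_right m_def vv inner_commute)
  have key: "2 * (w \<bullet> w) \<le> e * (m * (w \<bullet> w) - w \<bullet> (A *v w))" if e: "e > 0" for e
  proof -
    define x where "x = v + e *\<^sub>R w"
    have xx: "x \<bullet> x = 1 + e^2 * (w \<bullet> w)"
      unfolding x_def by (simp add: inner_add_left inner_add_right vv vw inner_commute power2_eq_square)
    have xpos: "x \<bullet> x > 0" unfolding xx by (simp add: add_pos_nonneg)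
    have nx: "norm x > 0" using xpos by simp
    have "x /\<^sub>R norm x \<in> ?K" using W vW wW nx unfolding x_def
      by (auto simp: subspace_scale subspace_add)
    from vmax[OF this] have "(x /\<^sub>R norm x) \<bullet> (A *v (x /\<^sub>R norm x)) \<le> m" by (simp add: m_def)
    then have "(x \<bullet> (A *v x)) / (norm x)^2 \<le> m"
      by (simp add: matrix_vector_mult_scaleR power2_eq_square divide_inverse mult.assoc, simp only: mult_ac)
    then have "x \<bullet> (A *v x) \<le> m * (x \<bullet> x)"
      using nx by (simp add: divide_le_eq power2_norm_eq_inner)
    moreover have "x \<bullet> (A *v x) = m + 2 * e * (w \<bullet> w) + e^2 * (w \<bullet> (A *v w))"
    proof -
      have "v \<bullet> (A *v w) = w \<bullet> w" using sym_dot[OF sym, of v w] wAv by (simp add: inner_commute)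
      then show ?thesis unfolding x_def
        by (simp add: matrix_vector_right_distrib matrix_vector_mult_scaleR inner_add_left inner_add_right
              m_def wAv power2_eq_square algebra_simps)
    qed
    ultimately have "2 * e * (w \<bullet> w) \<le> e^2 * (m * (w \<bullet> w) - w \<bullet> (A *v w))"
      unfolding xx by (simp add: algebra_simps)
    then show ?thesis using e by (simp add: power2_eq_square mult.assoc)
  qed
  have "w \<bullet> w \<le> 0"
  proof (rule ccontr)
    assume "\<not> w \<bullet> w \<le> 0"
    then have p: "w \<bullet> w > 0" by linarith
    define c where "c = \<bar>m * (w \<bullet> w) - w \<bullet> (A *v w)\<bar> + 1"
    have c: "c > 0" unfolding c_def by simp
    have "2 * (w \<bullet> w) \<le> ((w \<bullet> w) / c) * (m * (w \<bullet> w) - w \<bullet> (A *v w))"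
      using key[of "(w \<bullet> w) / c"] p c by simp
    also have "\<dots> \<le> ((w \<bullet> w) / c) * c"
      using p c unfolding c_def by (intro mult_left_mono) auto
    also have "\<dots> = w \<bullet> w" using c by simp
    finally show False using p by simp
  qed
  then have "w = 0" using inner_ge_zero[of w] by (simp add: order_antisym)
  then show ?thesis using vW nv unfolding w_def m_def by auto
qed

definition dmat :: "('n \<Rightarrow> real) \<Rightarrow> real^'n^'n" where
  "dmat \<mu> = (\<chi> i j. if i = j then \<mu> i else 0)"

lemma eig_sets:
  fixes A :: "real^'n^'n"
  assumes sym: "transpose A = A"
  shows "k \<le> CARD('n) \<Longrightarrow> \<exists>S. finite S \<and> card S = k \<and> pairwise orthogonal S \<and>
      (\<forall>x\<in>S. norm x = 1 \<and> A *v x = (x \<bullet> (A *v x)) *\<^sub>R x)"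
proof (induction k)
  case 0
  then show ?case by (intro exI[of _ "{}"]) auto
next
  case (Suc k)
  then obtain S where S: "finite S" "card S = k" "pairwise orthogonal S"
      "\<forall>x\<in>S. norm x = 1 \<and> A *v x = (x \<bullet> (A *v x)) *\<^sub>R x" by auto
  define W where "W = {y. \<forall>x \<in> S. orthogonal x y}"
  have sW: "subspace W" unfolding W_def by (rule subspace_orthogonal_to_vectors)
  have invW: "A *v y \<in> W" if "y \<in> W" for y
    unfolding W_def mem_Collect_eq
  proof (intro ballI)
    fix x assume x: "x \<in> S"
    have "x \<bullet> (A *v y) = (A *v x) \<bullet> y" by (rule sym_dot[OF sym])
    also have "\<dots> = (x \<bullet> (A *v x)) * (x \<bullet> y)" using S(4) x
      by (metis inner_scaleR_left)
    also have "\<dots> = 0" using that x unfolding W_def orthogonal_def by auto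
    finally show "orthogonal x (A *v y)" unfolding orthogonal_def .
  qed
  have "0 \<notin> S" using S(4) by auto
  then have indS: "independent S" using S(3) pairwise_orthogonal_independent by blast
  have "span S \<noteq> UNIV"
  proof
    assume "span S = UNIV"
    then have "dim (UNIV :: (real^'n) set) = dim S" by (metis dim_span)
    also have "\<dots> = k" using dim_eq_card_independent[OF indS] S(2) by simp
    finally show False using Suc.prems by simp
  qed
  then obtain y where y: "y \<notin> span S" by blast
  obtain p z where p: "p \<in> span S" and z: "\<And>w. w \<in> span S \<Longrightarrow> orthogonal z w" and yz: "y = p + z"
    using orthogonal_subspace_decomp_exists by blast
  have zW: "z \<in> W" unfolding W_def using z span_base orthogonal_commute by blast
  have "z \<noteq> 0" using y p yz by auto
  then have "W \<noteq> {0}" using zW by auto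
  from eig_exists[OF sym sW invW this] obtain v where v: "v \<in> W" "norm v = 1"
    "A *v v = (v \<bullet> (A *v v)) *\<^sub>R v" by blast
  have vS: "v \<notin> S"
  proof
    assume "v \<in> S"
    then have "v \<bullet> v = 0" using v(1) unfolding W_def orthogonal_def by auto
    then show False using v(2) by simp
  qed
  show ?case
  proof (intro exI[of _ "insert v S"] conjI)
    show "finite (insert v S)" using S by simp
    show "card (insert v S) = Suc k" using S vS by simp
    show "pairwise orthogonal (insert v S)"
      using S(3) v(1) unfolding W_def pairwise_insert by (auto simp: orthogonal_commute)
    show "\<forall>x\<in>insert v S. norm x = 1 \<and> A *v x = (x \<bullet> (A *v x)) *\<^sub>R x" using S(4) v by auto
  qed
qed

lemma spectral:
  fixes A :: "real^'n^'n"
  assumes sym: "transpose A = A"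
  shows "\<exists>(U::real^'n^'n) \<mu>. transpose U ** U = mat 1 \<and> A ** U = U ** dmat \<mu>"
proof -
  obtain S where S: "finite S" "card S = CARD('n)" "pairwise orthogonal S"
      "\<forall>x\<in>S. norm x = 1 \<and> A *v x = (x \<bullet> (A *v x)) *\<^sub>R x"
    using eig_sets[OF sym, of "CARD('n)"] by auto
  obtain h where h: "bij_betw h (UNIV::'n set) S"
    using finite_same_card_bij[of "UNIV::'n set" S] S by auto
  define U :: "real^'n^'n" where "U = (\<chi> i j. h j $ i)"
  define \<mu> where "\<mu> j = h j \<bullet> (A *v h j)" for j
  have col: "column j U = h j" for j by (simp add: U_def column_def vec_eq_iff)
  have hS: "h j \<in> S" for j using h bij_betwE by blast
  have hinj: "h i = h j \<Longrightarrow> i = j" for i j using h by (metis UNIV_I bij_betw_iff_bijections)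
  have "transpose U ** U = mat 1"
  proof -
    have "h i \<bullet> h j = (if i = j then 1 else 0)" for i j
    proof (cases "i = j")
      case True then show ?thesis using S(4) hS by (simp add: norm_eq_1)
    next
      case False then show ?thesis using S(3) hS hinj unfolding pairwise_def orthogonal_def by metis
    qed
    then show ?thesis unfolding matrix_mult_transpose_dot_column col
      by (simp add: vec_eq_iff mat_def)
  qed
  moreover have "A ** U = U ** dmat \<mu>"
  proof -
    have e: "A *v h j = \<mu> j *\<^sub>R h j" for j using S(4) hS \<mu>_def by auto
    have "(A ** U) $ i $ j = (U ** dmat \<mu>) $ i $ j" for i j
    proof -
      have "(A ** U) $ i $ j = (A *v h j) $ i"
        by (simp add: matrix_matrix_mult_def matrix_vector_mult_def U_def)
      also have "\<dots> = \<mu> j * h j $ i" using e by simp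
      also have "\<dots> = (U ** dmat \<mu>) $ i $ j"
        by (simp add: matrix_matrix_mult_def dmat_def U_def if_distrib if_distribR sum.delta' cong: if_cong)
      finally show ?thesis .
    qed
    then show ?thesis by (simp add: vec_eq_iff)
  qed
  ultimately show ?thesis by (intro exI[of _ U] exI[of _ \<mu>] conjI)
qed

lemma column_mult: "column i (A ** (B::real^'n^'n)) = A *v column i B"
  by (simp add: column_def matrix_matrix_mult_def matrix_vector_mult_def vec_eq_iff)

lemma sum_delta_mult:
  fixes f g :: "'n::finite \<Rightarrow> real"
  shows "(\<Sum>j\<in>UNIV. f j * (if j = i then g j else 0)) = f i * (g i :: real)"
proof -
  have eq: "(\<lambda>j. f j * (if j = i then g j else 0)) = (\<lambda>j. if j = i then f j * g j else 0)" by auto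
  show ?thesis unfolding eq by simp
qed

lemma column_dmat: "column i (U ** dmat q) = q i *\<^sub>R column i (U::real^'n^'n)"
  unfolding column_def matrix_matrix_mult_def dmat_def vec_eq_iff
  by (simp add: sum_delta_mult mult.commute)

lemma dmat_mult: "dmat a ** dmat b = dmat (\<lambda>i. a i * b i)"
proof -
  have "(\<Sum>k\<in>UNIV. (if i = k then a i else 0) * (if k = j then b k else 0)) =
     (if i = j then a i * b i else 0)" for i j
  proof -
    have "(\<lambda>k. (if i = k then a i else 0) * (if k = j then b k else 0)) = (\<lambda>k. if k = j then (if i = j then a i * b i else 0) else 0)"
      by auto
    then show ?thesis by (simp only:) simp
  qed
  then show ?thesis unfolding matrix_matrix_mult_def dmat_def vec_eq_iff by simp
qed

lemma dmat_one: "dmat (\<lambda>i. 1) = mat 1"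
  by (simp add: dmat_def mat_def)

lemma transpose_dmat: "transpose (dmat a) = dmat a"
  by (simp add: dmat_def transpose_def vec_eq_iff)

lemma det_dmat: "det (dmat a) = (\<Prod>i\<in>UNIV. a i)"
  by (subst det_diagonal) (auto simp: dmat_def)

lemma trace_dmat: "trace (dmat a) = (\<Sum>i\<in>UNIV. a i)"
  by (simp add: trace_def dmat_def)

lemma dot_transpose: "x \<bullet> (transpose A *v y) = (A *v x) \<bullet> (y::real^'n)"
  for A :: "real^'n^'n"
  by (metis dot_lmul_matrix inner_commute transpose_matrix_vector)

lemma matrix_inv_eq:
  fixes A B :: "real^'n^'n"
  assumes "A ** B = mat 1"
  shows "matrix_inv A = B"
proof -
  have BA: "B ** A = mat 1" using assms matrix_left_right_inverse by blast
  have "\<exists>A'. A ** A' = mat 1 \<and> A' ** A = mat 1" using assms BA by blast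
  then have X: "A ** matrix_inv A = mat 1 \<and> matrix_inv A ** A = mat 1"
    unfolding matrix_inv_def by (rule someI_ex)
  have "matrix_inv A = matrix_inv A ** (A ** B)" using assms by simp
  also have "\<dots> = B" using X by (simp add: matrix_mul_assoc)
  finally show ?thesis .
qed

lemma eig_col:
  fixes A U :: "real^'n^'n"
  assumes "transpose U ** U = mat 1" "A ** U = U ** dmat \<mu>"
  shows "A *v column i U = \<mu> i *\<^sub>R column i U" "column i U \<bullet> column i U = 1"
proof -
  show "A *v column i U = \<mu> i *\<^sub>R column i U"
  proof -
    have "A *v column i U = column i (A ** U)" by (simp only: column_mult)
    also have "\<dots> = column i (U ** dmat \<mu>)" by (simp only: assms(2))
    also have "\<dots> = \<mu> i *\<^sub>R column i U" by (rule column_dmat)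
    finally show ?thesis .
  qed
  show "column i U \<bullet> column i U = 1"
  proof -
    have "column i U \<bullet> column i U = (transpose U ** U) $ i $ i"
      unfolding matrix_mult_transpose_dot_column by simp
    also have "\<dots> = 1" unfolding assms(1) by (simp add: mat_def)
    finally show ?thesis .
  qed
qed

lemma amgm_prod:
  fixes b :: "'n::finite \<Rightarrow> real"
  assumes "\<And>i. b i \<ge> 0"
  shows "(\<Prod>i\<in>UNIV. b i) \<le> ((\<Sum>i\<in>UNIV. b i) / CARD('n))^CARD('n)"
proof -
  let ?n = "CARD('n)"
  have n: "?n > 0" by simp
  have P: "(\<Prod>i\<in>UNIV. b i) \<ge> 0" using assms by (simp add: prod_nonneg)
  have "(\<Prod>i\<in>UNIV. b i) powr (1 / ?n) \<le> (\<Sum>i\<in>UNIV. b i / ?n)"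
    using arith_geom_mean[of "UNIV::'n set" b] assms by simp
  also have "\<dots> = (\<Sum>i\<in>UNIV. b i) / ?n" by (simp add: sum_divide_distrib)
  finally have le: "(\<Prod>i\<in>UNIV. b i) powr (1 / ?n) \<le> (\<Sum>i\<in>UNIV. b i) / ?n" .
  have "(\<Prod>i\<in>UNIV. b i) = ((\<Prod>i\<in>UNIV. b i) powr (1 / ?n)) ^ ?n"
  proof (cases "(\<Prod>i\<in>UNIV. b i) = 0")
    case True show ?thesis unfolding True using n by simp
  next
    case False
    then have pp: "(\<Prod>i\<in>UNIV. b i) > 0" using P by (metis less_eq_real_def)
    have "((\<Prod>i\<in>UNIV. b i) powr (1 / ?n)) ^ ?n = ((\<Prod>i\<in>UNIV. b i) powr (1 / ?n)) powr (real ?n)"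
      using powr_realpow[symmetric, OF powr_gt_zero[THEN iffD2, OF False]] .
    also have "\<dots> = (\<Prod>i\<in>UNIV. b i)" using n pp by (simp add: powr_powr)
    finally show ?thesis by simp
  qed
  also have "\<dots> \<le> ((\<Sum>i\<in>UNIV. b i) / ?n) ^ ?n"
    by (rule power_mono[OF le]) simp
  finally show ?thesis .
qed

lemma det_trace_ineq:
  fixes Q S :: "real^'n^'n"
  assumes Qs: "transpose Q = Q" and Qp: "\<And>v. v \<noteq> 0 \<Longrightarrow> 0 < v \<bullet> (Q *v v)"
    and Ss: "transpose S = S" and Sp: "\<And>v. 0 \<le> v \<bullet> (S *v v)" and Si: "invertible S"
  shows "0 < trace (matrix_inv Q ** S)" "0 < det (matrix_inv Q ** S)"
    "det (matrix_inv Q ** S) \<le> (trace (matrix_inv Q ** S) / CARD('n)) ^ CARD('n)"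
proof -
  obtain U :: "real^'n^'n" and q where U: "transpose U ** U = mat 1" "Q ** U = U ** dmat q"
    using spectral[OF Qs] by blast
  have qpos: "q i > 0" for i
  proof -
    let ?c = "column i U"
    have e: "Q *v ?c = q i *\<^sub>R ?c" and cc: "?c \<bullet> ?c = 1" using eig_col[OF U] by auto
    have "?c \<noteq> 0" using cc by auto
    from Qp[OF this] show ?thesis using e cc by simp
  qed
  define r where "r i = 1 / sqrt (q i)" for i
  define C where "C = U ** dmat r"
  have "transpose C ** Q ** C = dmat r ** (transpose U ** (Q ** U)) ** dmat r"
    unfolding C_def by (simp add: matrix_transpose_mul transpose_dmat matrix_mul_assoc)
  also have "\<dots> = dmat r ** dmat q ** dmat r"
  proof -
    have "transpose U ** (Q ** U) = dmat q" by (simp only: U(2) matrix_mul_assoc U(1) matrix_mul_lid)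
    then show ?thesis by simp
  qed
  also have "\<dots> = mat 1"
  proof -
    have "(\<lambda>i. r i * q i * r i) = (\<lambda>i. 1)"
    proof
      fix i
      have "sqrt (q i) * sqrt (q i) = q i" using qpos[of i] by simp
      moreover have "r i * q i * r i = q i / (sqrt (q i) * sqrt (q i))" unfolding r_def by simp
      ultimately show "r i * q i * r i = 1" using qpos[of i] by simp
    qed
    then show ?thesis by (simp add: dmat_mult dmat_one)
  qed
  finally have CQC: "transpose C ** Q ** C = mat 1" .
  have "C ** (transpose C ** Q) = mat 1"
    using CQC matrix_left_right_inverse by (metis matrix_mul_assoc)
  then have "(C ** transpose C) ** Q = mat 1" by (simp only: matrix_mul_assoc)
  then have "Q ** (C ** transpose C) = mat 1" using matrix_left_right_inverse by blast
  then have Qinv: "matrix_inv Q = C ** transpose C" by (rule matrix_inv_eq)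
  define B where "B = transpose C ** S ** C"
  have Bs: "transpose B = B" unfolding B_def using Ss by (simp add: matrix_transpose_mul matrix_mul_assoc)
  obtain V :: "real^'n^'n" and b where V: "transpose V ** V = mat 1" "B ** V = V ** dmat b"
    using spectral[OF Bs] by blast
  have VVt: "V ** transpose V = mat 1" using V(1) matrix_left_right_inverse by blast
  have bnn: "b i \<ge> 0" for i
  proof -
    let ?c = "column i V"
    have e: "B *v ?c = b i *\<^sub>R ?c" and cc: "?c \<bullet> ?c = 1" using eig_col[OF V] by auto
    have "?c \<bullet> (B *v ?c) = (C *v ?c) \<bullet> (S *v (C *v ?c))"
      unfolding B_def by (simp add: matrix_vector_mul_assoc[symmetric], metis dot_lmul_matrix inner_commute)
    then have "0 \<le> ?c \<bullet> (B *v ?c)" using Sp by simp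
    then show ?thesis using e cc by simp
  qed
  have detB: "det (matrix_inv Q ** S) = det B"
    unfolding Qinv B_def by (simp add: det_mul)
  have "det B = det (transpose V ** B ** V)"
  proof -
    have "det (transpose V) * det V = 1" using V(1) by (metis det_I det_mul)
    then show ?thesis by (simp add: det_mul)
  qed
  also have VBV: "transpose V ** B ** V = dmat b"
    by (simp only: matrix_mul_assoc[symmetric] V(2), simp only: matrix_mul_assoc V(1) matrix_mul_lid)
  finally have detb: "det (matrix_inv Q ** S) = (\<Prod>i\<in>UNIV. b i)" using detB det_dmat by simp
  have "trace (matrix_inv Q ** S) = trace (C ** (transpose C ** S))"
    unfolding Qinv by (simp only: matrix_mul_assoc)
  also have "\<dots> = trace B" unfolding B_def by (rule trace_mul_sym)
  also have "\<dots> = trace (B ** V ** transpose V)" by (simp only: matrix_mul_assoc[symmetric] VVt matrix_mul_rid)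
  also have "\<dots> = trace (transpose V ** (B ** V))" by (rule trace_mul_sym)
  also have "\<dots> = trace (dmat b)" using VBV by (simp only: matrix_mul_assoc)
  finally have trb: "trace (matrix_inv Q ** S) = (\<Sum>i\<in>UNIV. b i)" using trace_dmat by simp
  have "det C \<noteq> 0"
    using arg_cong[OF CQC, of det] by (auto simp: det_mul)
  moreover have "det S \<noteq> 0" using Si invertible_det_nz by blast
  ultimately have "det B \<noteq> 0" unfolding B_def by (simp add: det_mul)
  then have "(\<Prod>i\<in>UNIV. b i) \<noteq> 0" using detB detb by simp
  then have bnz: "b i \<noteq> 0" for i by simp
  have bpos: "b i > 0" for i using bnn[of i] bnz[of i] by linarith
  show "0 < det (matrix_inv Q ** S)" unfolding detb using bpos by (simp add: prod_pos)
  show "0 < trace (matrix_inv Q ** S)" unfolding trb using bpos by (simp add: sum_pos)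
  show "det (matrix_inv Q ** S) \<le> (trace (matrix_inv Q ** S) / CARD('n)) ^ CARD('n)"
    unfolding detb trb using amgm_prod[of b, OF bnn] .
qed

lemma e1: fixes a b c :: ennreal assumes "a \<le> c + b" "b \<noteq> top" shows "a - b \<le> c"
  using assms by (simp add: ennreal_minus_le_iff add.commute)

lemma nn_integral_affine_le:
  fixes g :: "'a \<Rightarrow> ennreal" and c K :: ennreal
  assumes c: "c \<noteq> 0" "c \<noteq> top" and K: "K \<noteq> top"
  shows "(\<integral>\<^sup>+x. c * g x + K \<partial>M) \<le> c * integral\<^sup>N M g + K * emeasure M (space M)"
  unfolding nn_integral_def[of M "\<lambda>x. c * g x + K"]
proof (intro SUP_least, clarify)
  fix s assume s: "simple_function M s" "s \<le> (\<lambda>x. c * g x + K)"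
  define s' where "s' = (\<lambda>y. (y - K) / c) \<circ> s"
  have s'S: "simple_function M s'" unfolding s'_def using s(1) by (rule simple_function_compose)
  have s'g: "s' \<le> g"
  proof (rule le_funI)
    fix x
    have "s x \<le> c * g x + K" using s(2) by (simp add: le_fun_def)
    then have "s x - K \<le> c * g x" using K by (rule e1)
    moreover have "c > 0" using c(1) by (simp add: zero_less_iff_neq_zero)
    ultimately show "s' x \<le> g x" unfolding s'_def o_def
      using divide_le_posI_ennreal by blast
  qed
  have le: "s x \<le> c * s' x + K" for x
  proof -
    have "c * s' x = c * (s x - K) / c" unfolding s'_def o_def by (rule ennreal_times_divide)
    also have "\<dots> = s x - K" using c by (simp add: mult.commute[of c] mult_divide_eq_ennreal)
    finally have "c * s' x = s x - K" .
    then show ?thesis by (simp add: diff_add_self_ennreal less_imp_le not_le)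
  qed
  have S2: "simple_function M (\<lambda>x. c * s' x + K)"
    using s'S by (intro simple_function_add simple_function_mult) auto
  have "integral\<^sup>S M s \<le> integral\<^sup>S M (\<lambda>x. c * s' x + K)"
    using s(1) S2 le by (intro simple_integral_mono) auto
  also have "\<dots> = c * integral\<^sup>S M s' + K * emeasure M (space M)"
    using s'S by (subst simple_integral_add) auto
  also have "\<dots> \<le> c * integral\<^sup>N M g + K * emeasure M (space M)"
  proof -
    have "integral\<^sup>S M s' \<le> integral\<^sup>N M g"
      unfolding nn_integral_def using s'S s'g by (intro SUP_upper) auto
    then show ?thesis by (intro add_right_mono mult_left_mono) auto
  qed
  finally show "integral\<^sup>S M s \<le> c * integral\<^sup>N M g + K * emeasure M (space M)" .
qed

lemma e2ennreal_le_of: "x \<le> enn2ereal y \<Longrightarrow> e2ennreal x \<le> y"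
  using e2ennreal_mono[of x "enn2ereal y"] by simp

lemma ereal_minus_le_self: "0 \<le> b \<Longrightarrow> 0 \<le> a \<Longrightarrow> a - b \<le> (a::ereal)"
  using ereal_diff_le_self by auto

lemma ereal_le_from_diff: "a - b \<le> ereal C \<Longrightarrow> 0 \<le> b \<Longrightarrow> b \<le> ereal Kx \<Longrightarrow> (a::ereal) \<le> ereal (C + Kx)"
  by (cases a; cases b) auto

lemma qint_le_pos: "qint M f \<le> enn2ereal (\<integral>\<^sup>+x. e2ennreal (f x) \<partial>M)"
  unfolding qint_def by (rule ereal_minus_le_self) auto

lemma qint_nonneg:
  assumes "\<And>x. x \<in> space M \<Longrightarrow> 0 \<le> f x"
  shows "qint M f = enn2ereal (\<integral>\<^sup>+x. e2ennreal (f x) \<partial>M)"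
proof -
  have "(\<integral>\<^sup>+x. e2ennreal (- f x) \<partial>M) = (\<integral>\<^sup>+x. 0 \<partial>M)"
    using assms by (intro nn_integral_cong) (simp add: e2ennreal_neg)
  then show ?thesis unfolding qint_def by (simp add: zero_ennreal.rep_eq)
qed

lemma affine_bound:
  fixes M :: "'a measure" and f e :: "'a \<Rightarrow> ereal" and K :: real
  assumes M1: "emeasure M (space M) = 1" and K: "K \<ge> 0"
    and e0: "\<And>x. x \<in> space M \<Longrightarrow> 0 \<le> e x"
    and fe: "\<And>x. x \<in> space M \<Longrightarrow> f x \<le> 2 * e x + ereal K"
  shows "enn2ereal (\<integral>\<^sup>+x. e2ennreal (f x) \<partial>M) \<le> 2 * enn2ereal (\<integral>\<^sup>+x. e2ennreal (e x) \<partial>M) + ereal K"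
proof -
  have pw: "e2ennreal (f x) \<le> 2 * e2ennreal (e x) + ennreal K" if x: "x \<in> space M" for x
  proof (rule e2ennreal_le_of)
    have "enn2ereal (2 * e2ennreal (e x) + ennreal K) = 2 * e x + ereal K"
      using e0[OF x] K by (simp add: plus_ennreal.rep_eq times_ennreal.rep_eq enn2ereal_e2ennreal)
    then show "f x \<le> enn2ereal (2 * e2ennreal (e x) + ennreal K)" using fe[OF x] by simp
  qed
  have "(\<integral>\<^sup>+x. e2ennreal (f x) \<partial>M) \<le> (\<integral>\<^sup>+x. 2 * e2ennreal (e x) + ennreal K \<partial>M)"
    using pw by (rule nn_integral_mono)
  also have "\<dots> \<le> 2 * (\<integral>\<^sup>+x. e2ennreal (e x) \<partial>M) + ennreal K * emeasure M (space M)"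
    by (rule nn_integral_affine_le) auto
  finally have "(\<integral>\<^sup>+x. e2ennreal (f x) \<partial>M) \<le> 2 * (\<integral>\<^sup>+x. e2ennreal (e x) \<partial>M) + ennreal K"
    using M1 by simp
  then show ?thesis using K
    by (simp add: less_eq_ennreal.rep_eq plus_ennreal.rep_eq times_ennreal.rep_eq)
qed

lemma inner_bound:
  fixes M :: "'a measure" and f e :: "'a \<Rightarrow> ereal" and K :: real
  assumes M1: "emeasure M (space M) = 1" and K: "K \<ge> 0"
    and e0: "\<And>x. x \<in> space M \<Longrightarrow> 0 \<le> e x"
    and fe: "\<And>x. x \<in> space M \<Longrightarrow> f x \<le> 2 * e x + ereal K"
  shows "qint M f \<le> 2 * qint M e + ereal K" "0 \<le> qint M e"
proof -
  have eq: "qint M e = enn2ereal (\<integral>\<^sup>+x. e2ennreal (e x) \<partial>M)"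
    by (rule qint_nonneg) (rule e0)
  show "qint M f \<le> 2 * qint M e + ereal K"
    unfolding eq by (rule order_trans[OF qint_le_pos[of M f] affine_bound[OF M1 K e0 fe]])
  show "0 \<le> qint M e" unfolding eq by simp
qed

lemma outer_bound:
  fixes M :: "'a measure" and F E :: "'a \<Rightarrow> ereal" and xi :: "'a \<Rightarrow> real" and K Kx C :: real
  assumes M1: "emeasure M (space M) = 1" and K: "K \<ge> 0" and Kx: "Kx \<ge> 0"
    and FE: "\<And>w. w \<in> space M \<Longrightarrow> F w \<le> 2 * E w + ereal K"
    and E0: "\<And>w. w \<in> space M \<Longrightarrow> 0 \<le> E w"
    and xi: "\<And>w. w \<in> space M \<Longrightarrow> \<bar>xi w\<bar> \<le> Kx"
    and J: "qint M (\<lambda>w. E w + ereal (xi w)) \<le> ereal C"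
  shows "qint M F \<le> ereal (2 * (C + Kx) + (K + 2 * Kx))"
proof -
  define H where "H w = E w + ereal (xi w)" for w
  define H' where "H' w = enn2ereal (e2ennreal (H w))" for w
  have H'0: "0 \<le> H' w" for w unfolding H'_def by simp
  have pw: "F w \<le> 2 * H' w + ereal (K + 2 * Kx)" if w: "w \<in> space M" for w
  proof (cases "E w")
    case (real r)
    have r0: "r \<ge> 0" using E0[OF w] real by simp
    have xw: "\<bar>xi w\<bar> \<le> Kx" by (rule xi[OF w])
    define m where "m = max 0 (r + xi w)"
    have H'eq: "H' w = ereal m"
      unfolding H'_def H_def real m_def by (cases "r + xi w \<ge> 0") (auto simp: ennreal_neg zero_ennreal.rep_eq)
    have "r \<le> m + Kx" unfolding m_def using xw by (auto simp: abs_le_iff max_def)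
    then have "2 * r + K \<le> 2 * m + (K + 2 * Kx)" by linarith
    then have "2 * E w + ereal K \<le> 2 * H' w + ereal (K + 2 * Kx)" using real H'eq by simp
    with FE[OF w] show ?thesis by (rule order_trans)
  next
    case PInf
    then have "H' w = \<infinity>" unfolding H'_def H_def by simp
    then show ?thesis by simp
  next
    case MInf
    then show ?thesis using E0[OF w] by simp
  qed
  have K2: "K + 2 * Kx \<ge> 0" using K Kx by simp
  have A: "enn2ereal (\<integral>\<^sup>+w. e2ennreal (F w) \<partial>M) \<le> 2 * enn2ereal (\<integral>\<^sup>+w. e2ennreal (H' w) \<partial>M) + ereal (K + 2 * Kx)"
    by (rule affine_bound[OF M1 K2 _ pw]) (simp add: H'0)
  have HH: "e2ennreal (H' w) = e2ennreal (H w)" for w unfolding H'_def by simp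
  have neg: "(\<integral>\<^sup>+w. e2ennreal (- H w) \<partial>M) \<le> ennreal Kx"
  proof -
    have "(\<integral>\<^sup>+w. e2ennreal (- H w) \<partial>M) \<le> (\<integral>\<^sup>+w. ennreal Kx \<partial>M)"
    proof (rule nn_integral_mono, rule e2ennreal_le_of)
      fix w assume w: "w \<in> space M"
      have "- H w \<le> ereal Kx"
      proof (cases "E w")
        case (real r)
        then show ?thesis using E0[OF w] xi[OF w] unfolding H_def by simp
      qed (use E0[OF w] in \<open>auto simp: H_def\<close>)
      then show "- H w \<le> enn2ereal (ennreal Kx)" using Kx by simp
    qed
    then show ?thesis using M1 by simp
  qed
  have B: "enn2ereal (\<integral>\<^sup>+w. e2ennreal (H w) \<partial>M) \<le> ereal (C + Kx)"
  proof (rule ereal_le_from_diff)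
    show "enn2ereal (\<integral>\<^sup>+w. e2ennreal (H w) \<partial>M) - enn2ereal (\<integral>\<^sup>+w. e2ennreal (- H w) \<partial>M) \<le> ereal C"
      using J unfolding qint_def H_def .
    show "0 \<le> enn2ereal (\<integral>\<^sup>+w. e2ennreal (- H w) \<partial>M)" by simp
    show "enn2ereal (\<integral>\<^sup>+w. e2ennreal (- H w) \<partial>M) \<le> ereal Kx"
      using neg Kx by (simp add: less_eq_ennreal.rep_eq)
  qed
  have "qint M F \<le> enn2ereal (\<integral>\<^sup>+w. e2ennreal (F w) \<partial>M)" by (rule qint_le_pos)
  also have "\<dots> \<le> 2 * enn2ereal (\<integral>\<^sup>+w. e2ennreal (H w) \<partial>M) + ereal (K + 2 * Kx)"
    using A unfolding HH .
  also have "\<dots> \<le> 2 * ereal (C + Kx) + ereal (K + 2 * Kx)"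
    using B by (intro add_right_mono ereal_mult_left_mono) auto
  also have "\<dots> = ereal (2 * (C + Kx) + (K + 2 * Kx))" by simp
  finally show ?thesis .
qed

definition Kc :: "real \<Rightarrow> real" where
  "Kc bu = 2 * \<bar>ln bu + 1\<bar> * exp (2 * \<bar>ln bu + 1\<bar>) + 1"

lemma Kc_pos: "Kc bu > 0"
  unfolding Kc_def by (simp add: add_nonneg_pos)

lemma real_bound:
  fixes L l bu D :: real
  assumes L: "L > 0" and l: "0 < l" "l \<le> bu" and D: "D \<le> 0"
  shows "0 \<le> L * ln (L / l) - L + l - L / 2 * D"
    "L * ln L \<le> 2 * (L * ln (L / l) - L + l - L / 2 * D) + Kc bu"
proof -
  have "ln (l / L) \<le> l / L - 1" using L l by (intro ln_le_minus_one) simp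
  moreover have "ln (L / l) = - ln (l / L)" using L l by (simp add: ln_div)
  ultimately have "ln (L / l) \<ge> 1 - l / L" by simp
  then have "L * ln (L / l) \<ge> L * (1 - l / L)" using L by (intro mult_left_mono) auto
  then have A: "L * ln (L / l) \<ge> L - l" using L by (simp add: algebra_simps)
  have DD: "- (L / 2 * D) \<ge> 0" using L D by (simp add: mult_nonneg_nonpos)
  show "0 \<le> L * ln (L / l) - L + l - L / 2 * D" using A DD by linarith
  define c where "c = \<bar>ln bu + 1\<bar>"
  have c0: "c \<ge> 0" unfolding c_def by simp
  have lnl: "ln l \<le> ln bu" using l by simp
  have "L * ln (L / l) = L * ln L - L * ln l" using L l by (simp add: ln_div algebra_simps)
  also have "\<dots> \<ge> L * ln L - L * ln bu" using lnl L by (simp add: mult_left_mono)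
  finally have F1: "L * ln (L / l) \<ge> L * ln L - L * ln bu" .
  have "L * (ln bu + 1) \<le> L * c" unfolding c_def using L by (intro mult_left_mono) auto
  then have B: "L * ln (L / l) - L + l - L / 2 * D \<ge> L * ln L - c * L"
    using F1 DD l by (simp add: algebra_simps)
  have C: "2 * c * L - L * ln L \<le> Kc bu"
  proof (cases "ln L \<ge> 2 * c")
    case True
    then have "L * (2 * c) \<le> L * ln L" using L by (intro mult_left_mono) auto
    then show ?thesis using Kc_pos[of bu] by (simp add: algebra_simps)
  next
    case False
    then have Lb: "L < exp (2 * c)" using L by (metis exp_ln not_le exp_le_cancel_iff less_le_not_le)
    have "ln (1 / L) \<le> 1 / L - 1" using L by (intro ln_le_minus_one) simp
    then have "- ln L \<le> 1 / L - 1" using L by (simp add: ln_div)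
    then have "L * (- ln L) \<le> L * (1 / L - 1)" using L by (intro mult_left_mono) auto
    then have E: "- (L * ln L) \<le> 1 - L" using L by (simp add: algebra_simps)
    have "2 * c * L \<le> 2 * c * exp (2 * c)" using Lb c0 by (intro mult_left_mono) auto
    then show ?thesis using E L unfolding Kc_def c_def[symmetric] by linarith
  qed
  have C': "2 * (c * L) - L * ln L \<le> Kc bu" using C by (simp add: mult.assoc)
  show "L * ln L \<le> 2 * (L * ln (L / l) - L + l - L / 2 * D) + Kc bu"
  proof -
    have gen: "\<And>X a cl K :: real. a - cl \<le> X \<Longrightarrow> 2 * cl - a \<le> K \<Longrightarrow> a \<le> 2 * X + K" by linarith
    show ?thesis by (rule gen[OF B C'])
  qed
qed

lemma dmat_const: "dmat (\<lambda>_. c) ** A = c *\<^sub>R (A::real^'n^'n)"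
proof -
  have "dmat (\<lambda>_. c) = c *\<^sub>R (mat 1 :: real^'n^'n)"
    by (simp add: dmat_def mat_def vec_eq_iff)
  then show ?thesis by (simp add: scalar_matrix_assoc[symmetric])
qed

lemma det_scaleR': "det (c *\<^sub>R (A::real^'n^'n)) = c ^ CARD('n) * det A"
proof -
  have "det (c *\<^sub>R A) = det (dmat (\<lambda>_. c) ** A)" by (simp add: dmat_const)
  also have "\<dots> = c ^ CARD('n) * det A" by (simp add: det_mul det_dmat)
  finally show ?thesis .
qed

lemma pointwise:
  fixes l2 :: "real \<Rightarrow> real^'d \<Rightarrow> real" and S2 :: "real \<Rightarrow> real^'d \<Rightarrow> real^'d^'d"
  assumes Q: "pd (S2 t x)" and S: "psd S1" and l: "bl \<le> l2 t x" "l2 t x \<le> bu" "0 < bl"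
  shows "0 \<le> ell_tr l2 S2 t x S1"
    "ereal (xlogx (lambda1 S2 t x S1)) \<le> 2 * ell_tr l2 S2 t x S1 + ereal (Kc bu)"
proof -
  have lpos: "0 < l2 t x" using l by linarith
  have K: "Kc bu > 0" by (rule Kc_pos)
  have "0 \<le> ell_tr l2 S2 t x S1 \<and> ereal (xlogx (lambda1 S2 t x S1)) \<le> 2 * ell_tr l2 S2 t x S1 + ereal (Kc bu)"
  proof (cases "S1 = 0")
    case True
    have "lambda1 S2 t x S1 = 0" unfolding lambda1_def True by (simp add: trace_def)
    then show ?thesis using True lpos K unfolding ell_tr_def xlogx_def by simp
  next
    case nz: False
    show ?thesis
    proof (cases "invertible S1")
      case inv: True
      let ?Q = "S2 t x"
      let ?L = "lambda1 S2 t x S1"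
      have Qs: "transpose ?Q = ?Q" and Qp: "\<And>v. v \<noteq> 0 \<Longrightarrow> 0 < v \<bullet> (?Q *v v)"
        using Q unfolding pd_def by auto
      have Ss: "transpose S1 = S1" and Sp: "\<And>v. 0 \<le> v \<bullet> (S1 *v v)"
        using S unfolding psd_def by auto
      note DT = det_trace_ineq[OF Qs Qp Ss Sp inv]
      have Ldef: "?L = trace (matrix_inv ?Q ** S1) / CARD('d)" unfolding lambda1_def ..
      have Lpos: "?L > 0" unfolding Ldef using DT(1) by simp
      define dd where "dd = det (matrix_inv ?Q ** ((1 / ?L) *\<^sub>R S1))"
      have dd_eq: "dd = (1 / ?L) ^ CARD('d) * det (matrix_inv ?Q ** S1)"
        unfolding dd_def by (simp add: matrix_scalar_ac scalar_matrix_assoc[symmetric] det_scaleR')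
      have ddpos: "dd > 0" unfolding dd_eq using DT(2) Lpos by simp
      have "dd \<le> (1 / ?L) ^ CARD('d) * ?L ^ CARD('d)"
        unfolding dd_eq using DT(3) Lpos unfolding Ldef[symmetric] by (intro mult_left_mono) auto
      also have "\<dots> = 1" using Lpos by (simp add: power_mult_distrib[symmetric])
      finally have dd1: "dd \<le> 1" .
      have D: "ln dd \<le> 0" using ddpos dd1 by simp
      have ell: "ell_tr l2 S2 t x S1 = ereal (?L * ln (?L / l2 t x) - ?L + l2 t x - ?L / 2 * ln dd)"
        unfolding ell_tr_def dd_def using nz inv by (simp add: Let_def)
      note RB = real_bound[OF Lpos lpos l(2) D]
      have xl: "xlogx ?L = ?L * ln ?L" using Lpos unfolding xlogx_def by simp
      show ?thesis unfolding ell xl using RB by simp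
    next
      case False
      then show ?thesis using nz unfolding ell_tr_def by simp
    qed
  qed
  then show "0 \<le> ell_tr l2 S2 t x S1"
    "ereal (xlogx (lambda1 S2 t x S1)) \<le> 2 * ell_tr l2 S2 t x S1 + ereal (Kc bu)" by auto
qed

lemma space_path_space: "space path_space = paths"
  unfolding path_space_def canF_def by (simp add: space_measure_of_conv)

lemma nu_space: "space (restrict_space lborel {0..1::real}) = {0..1}"
  by (simp add: space_restrict_space)

lemma nu_one: "emeasure (restrict_space lborel {0..1::real}) (space (restrict_space lborel {0..1::real})) = 1"
  unfolding nu_space by (subst emeasure_restrict_space) auto

theorem mainTheorem11:
  fixes l2 :: "real \<Rightarrow> real^'d \<Rightarrow> real"
    and S2 :: "real \<Rightarrow> real^'d \<Rightarrow> real^'d^'d"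
    and \<xi> :: "(real \<Rightarrow> real^'d) \<Rightarrow> real"
    and P :: "nat \<Rightarrow> (real \<Rightarrow> real^'d) measure"
    and \<Sigma> :: "nat \<Rightarrow> real \<Rightarrow> (real \<Rightarrow> real^'d) \<Rightarrow> real^'d^'d"
    and bl bu M :: real
  assumes l2_cont: "continuous_on ({0..1} \<times> UNIV) (\<lambda>(t, x). l2 t x)"
    and S2_cont: "continuous_on ({0..1} \<times> UNIV) (\<lambda>(t, x). S2 t x)"
    and S2_pd: "\<forall>t\<in>{0..1}. \<forall>x. pd (S2 t x)"
    and R_consts: "0 < bl" "bl \<le> bu" "0 < M"
    and R_l2: "\<forall>t\<in>{0..1}. \<forall>x. bl \<le> l2 t x \<and> l2 t x \<le> bu"
    and R_S2: "\<forall>t\<in>{0..1}. \<forall>x. \<forall>v. v \<bullet> (S2 t x *v v) \<le> M * (v \<bullet> v)"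
    and xi_meas: "\<xi> \<in> borel_measurable path_space"
    and xi_bdd: "\<exists>K. \<forall>w\<in>paths. \<bar>\<xi> w\<bar> \<le> K"
    and xi_cont: "\<forall>w\<in>paths. \<forall>e>0. \<exists>\<delta>>0. \<forall>v\<in>paths. unif_dist v w < \<delta> \<longrightarrow> \<bar>\<xi> v - \<xi> w\<bar> < e"
    and inP: "\<forall>n\<ge>1. in_calP (P n) (\<Sigma> n)"
    and J_bdd: "\<exists>C::real. \<forall>n\<ge>1. J_obj l2 S2 \<xi> (P n) (\<Sigma> n) \<le> ereal C"
  shows "\<exists>C::real. \<forall>n\<ge>1.
           qint (P n) (\<lambda>w. qint (restrict_space lborel {0..1})
              (\<lambda>t. ereal (xlogx (lambda1 S2 t (w t) (\<Sigma> n t w))))) \<le> ereal C"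
proof -
  obtain C :: real where C: "\<forall>n\<ge>1. J_obj l2 S2 \<xi> (P n) (\<Sigma> n) \<le> ereal C" using J_bdd by blast
  obtain Kx0 where Kx0: "\<forall>w\<in>paths. \<bar>\<xi> w\<bar> \<le> Kx0" using xi_bdd by blast
  define Kx where "Kx = max 0 Kx0"
  have Kx: "Kx \<ge> 0" "\<forall>w\<in>paths. \<bar>\<xi> w\<bar> \<le> Kx" using Kx0 unfolding Kx_def by (auto intro: le_max_iff_disj[THEN iffD2])
  define K where "K = Kc bu"
  have K: "K \<ge> 0" unfolding K_def using Kc_pos[of bu] by simp
  let ?nu = "restrict_space lborel {0..1::real}"
  show ?thesis
  proof (intro exI[of _ "2 * (C + Kx) + (K + 2 * Kx)"] allI impI)
    fix n :: nat assume n: "n \<ge> 1"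
    have inc: "in_calP (P n) (\<Sigma> n)" using inP n by blast
    then have ps: "prob_space (P n)" and sets: "sets (P n) = sets path_space"
      and psdS: "\<forall>t\<in>{0..1}. \<forall>w\<in>paths. psd (\<Sigma> n t w)"
      unfolding in_calP_def by auto
    have sp: "space (P n) = paths" using sets_eq_imp_space_eq[OF sets] space_path_space by simp
    have M1: "emeasure (P n) (space (P n)) = 1" using ps by (simp add: prob_space.emeasure_space_1)
    have inner: "qint ?nu (\<lambda>t. ereal (xlogx (lambda1 S2 t (w t) (\<Sigma> n t w))))
        \<le> 2 * qint ?nu (\<lambda>t. ell_tr l2 S2 t (w t) (\<Sigma> n t w)) + ereal K
      \<and> 0 \<le> qint ?nu (\<lambda>t. ell_tr l2 S2 t (w t) (\<Sigma> n t w))" if w: "w \<in> paths" for w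
    proof -
      have pw: "0 \<le> ell_tr l2 S2 t (w t) (\<Sigma> n t w) \<and>
          ereal (xlogx (lambda1 S2 t (w t) (\<Sigma> n t w))) \<le> 2 * ell_tr l2 S2 t (w t) (\<Sigma> n t w) + ereal K"
        if t: "t \<in> space ?nu" for t
      proof -
        have t01: "t \<in> {0..1}" using t nu_space by simp
        have "pd (S2 t (w t))" using S2_pd t01 by blast
        moreover have "psd (\<Sigma> n t w)" using psdS t01 w by blast
        moreover have "bl \<le> l2 t (w t)" "l2 t (w t) \<le> bu" using R_l2 t01 by auto
        ultimately show ?thesis using pointwise[of S2 t "w t" "\<Sigma> n t w" bl l2 bu] R_consts(1)
          unfolding K_def by blast
      qed
      show ?thesis using inner_bound[OF nu_one K, of "\<lambda>t. ell_tr l2 S2 t (w t) (\<Sigma> n t w)"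
          "\<lambda>t. ereal (xlogx (lambda1 S2 t (w t) (\<Sigma> n t w)))"] pw by blast
    qed
    show "qint (P n) (\<lambda>w. qint ?nu (\<lambda>t. ereal (xlogx (lambda1 S2 t (w t) (\<Sigma> n t w)))))
        \<le> ereal (2 * (C + Kx) + (K + 2 * Kx))"
    proof (rule outer_bound[OF M1 K Kx(1)])
      fix w assume "w \<in> space (P n)"
      then have w: "w \<in> paths" using sp by simp
      show "qint ?nu (\<lambda>t. ereal (xlogx (lambda1 S2 t (w t) (\<Sigma> n t w))))
        \<le> 2 * qint ?nu (\<lambda>t. ell_tr l2 S2 t (w t) (\<Sigma> n t w)) + ereal K" using inner[OF w] by blast
      show "0 \<le> qint ?nu (\<lambda>t. ell_tr l2 S2 t (w t) (\<Sigma> n t w))" using inner[OF w] by blast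
      show "\<bar>\<xi> w\<bar> \<le> Kx" using Kx(2) w by blast
    next
      show "qint (P n) (\<lambda>w. qint ?nu (\<lambda>t. ell_tr l2 S2 t (w t) (\<Sigma> n t w)) + ereal (\<xi> w)) \<le> ereal C"
        using C n unfolding J_obj_def by blast
    qed
  qed
qed

end
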